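(* Let $p\geqslant1$ and let $\mu$ be a Borel regular measure supported on $[0,1]$. Then for every $f\in M^p_\Lambda$ with $f(0)=0$, \[\int_{[0,1]}|f(t)|^p\,\mathrm{d}\mu(t)\lesssim_p\int_{[0,1]}\int_{[0,1]}|f'(\rho t)|\,|f(\rho t)|^{p-1}\,\mathrm{d}\mu(t)\,\mathrm{d}\rho,\] where the implicit constant depends only on $p$.
   Context: $\Lambda=(\lambda_k)_{k\geqslant0}$ is an increasing sequence of positive reals with $\sum_k1/\lambda_k<\infty$; $M_\Lambda$ is the set of finite sums $\sum a_kt^{\lambda_k}$ on $[0,1]$ and $M^p_\Lambda$ is its closure in $L^p([0,1])$. *)

theory Defs
  imports "HOL-Analysis.Analysis"
begin

definition muntz_seq :: "(nat \<Rightarrow> real) \<Rightarrow> bool" where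
  "muntz_seq \<Lambda> \<longleftrightarrow> strict_mono \<Lambda> \<and> (\<forall>k. 0 < \<Lambda> k) \<and> summable (\<lambda>k. 1 / \<Lambda> k)"

definition muntz_poly :: "(nat \<Rightarrow> real) \<Rightarrow> (real \<Rightarrow> real) \<Rightarrow> bool" where
  "muntz_poly \<Lambda> g \<longleftrightarrow> (\<exists>n a. \<forall>t\<in>{0..1}. g t = (\<Sum>k<n. a k * t powr \<Lambda> k))"

text \<open>f belongs to M^p_Lambda, the closure of M_Lambda in L^p([0,1]): f is the L^p-limit
  on [0,1] of a sequence of Muntz polynomials.\<close>
definition muntz_Lp :: "real \<Rightarrow> (nat \<Rightarrow> real) \<Rightarrow> (real \<Rightarrow> real) \<Rightarrow> bool" where
  "muntz_Lp p \<Lambda> f \<longleftrightarrow> (\<exists>g. (\<forall>n. muntz_poly \<Lambda> (g n)) \<and>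
      ((\<lambda>n. \<integral>\<^sup>+ t\<in>{0..1}. ennreal (\<bar>g n t - f t\<bar> powr p) \<partial>lborel) \<longlonglongrightarrow> 0))"

end

theory Submission
  imports Defs
begin

lemma mono_left_lim:
  fixes g :: "real \<Rightarrow> real"
  assumes mono: "\<And>x y. 0 < x \<Longrightarrow> x \<le> y \<Longrightarrow> y < 1 \<Longrightarrow> g x \<le> g y"
    and bnd: "\<And>x. 0 < x \<Longrightarrow> x < 1 \<Longrightarrow> g x \<le> B"
  shows "\<exists>L. (g \<longlongrightarrow> L) (at_left 1)"
proof
  define S where "S = g ` {0<..<1}"
  have ne: "S \<noteq> {}" unfolding S_def by (auto intro: exI[of _ "1/2"])
  have bdd: "bdd_above S" unfolding S_def using bnd by (auto intro!: bdd_aboveI)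
  show "(g \<longlongrightarrow> Sup S) (at_left 1)"
  proof (rule order_tendstoI)
    fix a assume "a < Sup S"
    then obtain s where s: "s \<in> {0<..<1}" "a < g s" using less_cSup_iff[OF ne bdd] by (auto simp: S_def)
    have "eventually (\<lambda>x. x \<in> {s<..<1}) (at_left 1)" using s by (intro eventually_at_left_real) auto
    then show "eventually (\<lambda>x. a < g x) (at_left 1)"
    proof (rule eventually_mono)
      fix x assume "x \<in> {s<..<1}"
      then have "g s \<le> g x" using s by (intro mono) auto
      then show "a < g x" using s by simp
    qed
  next
    fix a assume a: "Sup S < a"
    show "eventually (\<lambda>x. g x < a) (at_left 1)"
    proof (rule eventually_at_left_1)
      fix z :: real assume "0 < z" "z < 1"
      then have "g z \<le> Sup S" unfolding S_def by (intro cSup_upper[OF _ bdd[unfolded S_def]]) auto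
      then show "g z < a" using a by simp
    qed
  qed
qed

locale L41 =
  fixes p :: real and f f' :: "real \<Rightarrow> real"
  assumes p1: "p \<ge> 1"
    and cont: "continuous_on {0..<1} f"
    and der: "\<And>x. x \<in> {0<..<1} \<Longrightarrow> (f has_real_derivative f' x) (at x)"
    and f0: "f 0 = 0"
begin

definition "G x = \<bar>f' x\<bar> * \<bar>f x\<bar> powr (p - 1)"
definition "Gm x = (if x \<in> {0<..<1} then G x else 0)"
definition "fm x = (if x \<in> {0<..<1} then f x else 0)"
definition "dm x = (if x \<in> {0<..<1} then f' x else 0)"

lemma G_nonneg: "G x \<ge> 0" by (simp add: G_def)
lemma Gm_nonneg: "Gm x \<ge> 0" by (simp add: Gm_def G_nonneg)
lemma Gm_le: "Gm x \<le> G x" by (simp add: Gm_def G_nonneg)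

lemma fm_meas[measurable]: "fm \<in> borel_measurable borel"
proof -
  have "continuous_on {0<..<1} f" using cont by (rule continuous_on_subset) auto
  moreover have "continuous_on (- {0<..<1}) (\<lambda>x. 0::real)" by simp
  ultimately have "(\<lambda>x. if x \<in> {0<..<1} then f x else 0) \<in> borel_measurable borel"
    by (intro borel_measurable_continuous_on_if) auto
  then show ?thesis unfolding fm_def .
qed

lemma dm_meas[measurable]: "dm \<in> borel_measurable borel"
proof (rule borel_measurable_LIMSEQ_real)
  define h where "h n x = (if x \<in> {0<..<1} then (fm (x + 1 / Suc n) - fm x) * Suc n else 0)" for n x
  show "h n \<in> borel_measurable borel" for n unfolding h_def by measurable
  show "(\<lambda>n. h n x) \<longlonglongrightarrow> dm x" if "x \<in> space borel" for x
  proof (cases "x \<in> {0<..<1}")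
    case False
    then have "h n x = 0" for n unfolding h_def by (rule if_not_P)
    moreover have "dm x = 0" unfolding dm_def by (rule if_not_P[OF False])
    ultimately show ?thesis by simp
  next
    case True
    have d: "((\<lambda>t. (f (x + t) - f x) / t) \<longlongrightarrow> f' x) (at 0)"
      using der[OF True] by (simp add: DERIV_def)
    have s: "filterlim (\<lambda>n. 1 / real (Suc n)) (at 0) sequentially"
      unfolding filterlim_at using LIMSEQ_inverse_real_of_nat by (simp add: divide_inverse)
    have "((\<lambda>n. (f (x + 1 / Suc n) - f x) / (1 / Suc n)) \<longlongrightarrow> f' x) sequentially"
      using filterlim_compose[OF d s] by simp
    moreover have "eventually (\<lambda>n. (f (x + 1 / Suc n) - f x) / (1 / Suc n) = h n x) sequentially"
    proof -
      obtain N where N: "1 / Suc N < 1 - x" using True by (metis diff_gt_0_iff_gt greaterThanLessThan_iff nat_approx_posE)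
      show ?thesis
      proof (rule eventually_sequentiallyI[of N])
        fix n assume "N \<le> n"
        then have "1 / real (Suc n) \<le> 1 / Suc N" by (simp add: frac_le)
        moreover have "0 < 1 / real (Suc n)" by simp
        ultimately have "x + 1 / Suc n \<in> {0<..<1}" using N True
          unfolding greaterThanLessThan_iff by linarith
        then show "(f (x + 1 / Suc n) - f x) / (1 / Suc n) = h n x"
          using True by (simp add: h_def fm_def)
      qed
    qed
    ultimately show ?thesis using True by (simp add: dm_def tendsto_cong)
  qed
qed

lemma Gm_alt: "Gm x = \<bar>dm x\<bar> * \<bar>fm x\<bar> powr (p - 1)"
  by (simp add: Gm_def G_def dm_def fm_def)

lemma Gm_meas[measurable]: "Gm \<in> borel_measurable borel"
  unfolding Gm_alt[abs_def] by measurable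

definition "phi x = \<bar>f x\<bar> powr p"
definition "N a b = (\<integral>\<^sup>+x\<in>{a..b}. ennreal (Gm x) \<partial>lborel)"

lemma p_pos: "p > 0" using p1 by simp

lemma phi_nonneg: "phi x \<ge> 0" by (simp add: phi_def)

lemma L1:
  assumes ab: "0 \<le> a" "a \<le> b" "b < 1" and nz: "\<And>x. x \<in> {a<..<b} \<Longrightarrow> f x \<noteq> 0"
  shows "ennreal \<bar>phi b - phi a\<bar> \<le> ennreal p * N a b"
proof (cases "N a b = \<infinity>")
  case True then show ?thesis using p_pos by (simp add: ennreal_mult_top)
next
  case False
  then obtain r where r: "N a b = ennreal r" "0 \<le> r" using ennreal_cases[of "N a b"] by auto
  have "(\<integral>\<^sup>+x. ennreal (Gm x * indicator {a..b} x) \<partial>lborel) = ennreal r"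
    using r(1) unfolding N_def by (simp add: indicator_mult_ennreal mult.commute)
  then have "((\<lambda>x. Gm x * indicator {a..b} x) has_integral r) UNIV"
    by (intro nn_integral_has_integral) (auto simp: Gm_nonneg r(2))
  then have Gint: "(Gm has_integral r) {a..b}"
  proof -
    have "(\<lambda>x. Gm x * indicator {a..b} x) = (\<lambda>x. if x \<in> {a..b} then Gm x else 0)"
      by (auto simp: indicator_def)
    then show ?thesis using \<open>((\<lambda>x. Gm x * indicator {a..b} x) has_integral r) UNIV\<close>
      using has_integral_restrict_UNIV[of "{a..b}" Gm r] by simp
  qed
  define D where "D x = (if x \<in> {a<..<b} then p * \<bar>f x\<bar> powr (p - 1) * (sgn (f x) * f' x) else 0)" for x
  have sub: "{a..b} \<subseteq> {0..<1}" using ab by auto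
  have contphi: "continuous_on {a..b} phi"
    unfolding phi_def using continuous_on_subset[OF cont sub] p_pos
    by (intro continuous_on_powr' continuous_intros) auto
  have derphi: "(phi has_vector_derivative D x) (at x)" if x: "x \<in> {a<..<b}" for x
  proof -
    have x01: "x \<in> {0<..<1}" using x ab by auto
    have fx: "f x \<noteq> 0" using nz[OF x] .
    have dabs: "(abs has_real_derivative sgn (f x)) (at (f x))"
    proof -
      have e1: "(norm::real\<Rightarrow>real) = abs" by (rule ext) simp
      have e2: "(\<lambda>h. h * sgn (f x)) = (*) (sgn (f x))" by (rule ext) (simp add: mult.commute)
      show ?thesis using has_derivative_norm[OF fx] unfolding has_field_derivative_def e1
        by (simp add: e2)
    qed
    have "((\<lambda>y. \<bar>f y\<bar>) has_real_derivative sgn (f x) * f' x) (at x)"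
      using DERIV_chain2[OF dabs der[OF x01]] .
    from DERIV_chain2[OF has_real_derivative_powr[of "\<bar>f x\<bar>" p] this]
    have "(phi has_real_derivative p * \<bar>f x\<bar> powr (p - 1) * (sgn (f x) * f' x)) (at x)"
      using fx unfolding phi_def by simp
    then show ?thesis using x unfolding D_def by (simp add: has_real_derivative_iff_has_vector_derivative)
  qed
  have Dint: "(D has_integral (phi b - phi a)) {a..b}"
    by (rule fundamental_theorem_of_calculus_interior[OF ab(2) contphi derphi])
  have bnd: "norm (D x) \<le> p * Gm x" if "x \<in> {a..b}" for x
  proof (cases "x \<in> {a<..<b}")
    case True
    then have "x \<in> {0<..<1}" using ab by auto
    moreover have "\<bar>sgn (f x)\<bar> = 1" using nz[OF True] by (simp add: abs_sgn_eq)
    ultimately show ?thesis using True p_pos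
      by (simp add: D_def Gm_def G_def abs_mult mult_ac)
  next
    case False
    then have "D x = 0" unfolding D_def by (rule if_not_P)
    then show ?thesis using p_pos by (simp add: Gm_nonneg)
  qed
  have pG: "((\<lambda>x. p * Gm x) has_integral p * r) {a..b}" using has_integral_mult_right[OF Gint] .
  have "norm (integral {a..b} D) \<le> integral {a..b} (\<lambda>x. p * Gm x)"
    by (rule integral_norm_bound_integral) (use Dint pG bnd in auto)
  also have "\<dots> = p * r" using pG by (rule integral_unique)
  finally have "\<bar>phi b - phi a\<bar> \<le> p * r" using Dint by (simp add: integral_unique)
  then have "ennreal \<bar>phi b - phi a\<bar> \<le> ennreal (p * r)" by (rule ennreal_leI)
  also have "\<dots> = ennreal p * N a b" using r p_pos by (simp add: ennreal_mult)
  finally show ?thesis .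
qed

lemma N_mono: "a \<le> a' \<Longrightarrow> b' \<le> b \<Longrightarrow> N a' b' \<le> N a b"
  unfolding N_def by (auto intro!: nn_integral_mono split: split_indicator)

lemma phi_zero: "f x = 0 \<Longrightarrow> phi x = 0" by (simp add: phi_def)

lemma L2:
  assumes ab: "0 \<le> a" "a \<le> b" "b < 1"
  shows "ennreal \<bar>phi b - phi a\<bar> \<le> ennreal p * N a b"
proof -
  define Z where "Z = {x \<in> {a..b}. f x = 0}"
  show ?thesis
  proof (cases "Z = {}")
    case True
    show ?thesis by (rule L1[OF ab]) (use True in \<open>auto simp: Z_def\<close>)
  next
    case False
    have sub: "{a..b} \<subseteq> {0..<1}" using ab by auto
    have cl: "closed Z" unfolding Z_def
      by (rule continuous_closed_preimage_constant[OF continuous_on_subset[OF cont sub]]) simp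
    have bdd: "bdd_below Z" "bdd_above Z" unfolding Z_def by (auto intro: bdd_belowI bdd_aboveI)
    define z1 where "z1 = Inf Z"
    define z2 where "z2 = Sup Z"
    have z1Z: "z1 \<in> Z" unfolding z1_def by (rule closed_contains_Inf[OF False bdd(1) cl])
    have z2Z: "z2 \<in> Z" unfolding z2_def by (rule closed_contains_Sup[OF False bdd(2) cl])
    have "ennreal \<bar>phi z1 - phi a\<bar> \<le> ennreal p * N a z1"
    proof (rule L1)
      show "0 \<le> a" "a \<le> z1" "z1 < 1" using z1Z ab by (auto simp: Z_def)
      fix x assume x: "x \<in> {a<..<z1}"
      show "f x \<noteq> 0"
      proof
        assume "f x = 0"
        then have "x \<in> Z" using x z1Z by (auto simp: Z_def)
        then have "z1 \<le> x" unfolding z1_def by (rule cInf_lower[OF _ bdd(1)])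
        then show False using x by auto
      qed
    qed
    also have "\<dots> \<le> ennreal p * N a b" using z1Z by (intro mult_left_mono N_mono) (auto simp: Z_def)
    finally have A: "ennreal (phi a) \<le> ennreal p * N a b"
      using z1Z phi_zero phi_nonneg by (simp add: Z_def)
    have "ennreal \<bar>phi b - phi z2\<bar> \<le> ennreal p * N z2 b"
    proof (rule L1)
      show "0 \<le> z2" "z2 \<le> b" "b < 1" using z2Z ab by (auto simp: Z_def)
      fix x assume x: "x \<in> {z2<..<b}"
      show "f x \<noteq> 0"
      proof
        assume "f x = 0"
        then have "x \<in> Z" using x z2Z by (auto simp: Z_def)
        then have "x \<le> z2" unfolding z2_def by (rule cSup_upper[OF _ bdd(2)])
        then show False using x by auto
      qed
    qed
    also have "\<dots> \<le> ennreal p * N a b" using z2Z by (intro mult_left_mono N_mono) (auto simp: Z_def)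
    finally have B: "ennreal (phi b) \<le> ennreal p * N a b"
      using z2Z phi_zero phi_nonneg by (simp add: Z_def)
    show ?thesis
    proof (cases "phi a \<le> phi b")
      case True
      then have "\<bar>phi b - phi a\<bar> \<le> phi b" using phi_nonneg[of a] by simp
      then show ?thesis using B by (meson ennreal_leI order_trans)
    next
      case False
      then have "\<bar>phi b - phi a\<bar> \<le> phi a" using phi_nonneg[of b] by simp
      then show ?thesis using A by (meson ennreal_leI order_trans)
    qed
  qed
qed

definition "K t = (\<integral>\<^sup>+\<rho>\<in>{0..1}. ennreal (Gm (\<rho> * t)) \<partial>lborel)"

lemma N_K: assumes t: "0 < t" "t \<le> 1" shows "N 0 t \<le> K t"
proof -
  define F where "F x = ennreal (Gm x) * indicator {0..t} x" for x
  have [measurable]: "F \<in> borel_measurable borel" unfolding F_def by measurable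
  have "N 0 t = (\<integral>\<^sup>+x. F x \<partial>lborel)" unfolding N_def F_def ..
  also have "\<dots> = ennreal \<bar>t\<bar> * (\<integral>\<^sup>+\<rho>. F (0 + t * \<rho>) \<partial>lborel)"
    using t by (intro nn_integral_real_affine) auto
  also have "(\<integral>\<^sup>+\<rho>. F (0 + t * \<rho>) \<partial>lborel) = K t"
    unfolding K_def F_def
  proof (intro nn_integral_cong)
    fix \<rho> :: real
    have "indicator {0..t} (t * \<rho>) = (indicator {0..1} \<rho> :: ennreal)"
      using t by (auto simp: indicator_def zero_le_mult_iff mult_le_cancel_left1)
    then show "ennreal (Gm (0 + t * \<rho>)) * indicator {0..t} (0 + t * \<rho>) = ennreal (Gm (\<rho> * t)) * indicator {0..1} \<rho>"
      by (simp add: mult.commute)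
  qed
  also have "ennreal \<bar>t\<bar> * K t \<le> 1 * K t" using t by (intro mult_right_mono) auto
  finally show ?thesis by simp
qed

lemma core: assumes t: "0 < t" "t < 1" shows "ennreal (phi t) \<le> ennreal p * K t"
proof -
  have "ennreal \<bar>phi t - phi 0\<bar> \<le> ennreal p * N 0 t" using t by (intro L2) auto
  moreover have "phi 0 = 0" using f0 by (simp add: phi_def)
  ultimately have "ennreal (phi t) \<le> ennreal p * N 0 t" using phi_nonneg[of t] by simp
  also have "\<dots> \<le> ennreal p * K t" using t by (intro mult_left_mono N_K) auto
  finally show ?thesis .
qed

lemma N_split: assumes "0 \<le> a" "a \<le> b" shows "N 0 b = N 0 a + N a b"
proof -
  have "N a b = (\<integral>\<^sup>+x. ennreal (Gm x) * indicator {a<..b} x \<partial>lborel)"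
    unfolding N_def
    by (rule nn_integral_cong_AE) (use AE_lborel_singleton[of a] in \<open>eventually_elim, auto split: split_indicator\<close>)
  moreover have "N 0 a + (\<integral>\<^sup>+x. ennreal (Gm x) * indicator {a<..b} x \<partial>lborel) =
      (\<integral>\<^sup>+x. ennreal (Gm x) * indicator {0..a} x + ennreal (Gm x) * indicator {a<..b} x \<partial>lborel)"
    unfolding N_def by (rule nn_integral_add[symmetric]) auto
  moreover have "\<dots> = N 0 b" unfolding N_def using assms
    by (intro nn_integral_cong) (auto split: split_indicator)
  ultimately show ?thesis by simp
qed

lemma phi_lim: assumes fin: "N 0 1 < \<infinity>" shows "\<exists>l. (phi \<longlongrightarrow> l) (at_left 1)"
proof -
  define Nr where "Nr s = enn2real (N 0 s)" for s
  have finab: "N a b < \<infinity>" if "0 \<le> a" "b \<le> 1" for a b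
    using N_mono[OF that] fin by (meson order.strict_trans1)
  have key: "\<bar>phi b - phi a\<bar> \<le> p * (Nr b - Nr a)" if ab: "0 \<le> a" "a \<le> b" "b < 1" for a b
  proof -
    have fa: "N a b < \<infinity>" "N 0 a < \<infinity>" using finab ab by auto
    have "Nr b = Nr a + enn2real (N a b)" unfolding Nr_def using N_split[of a b] ab fa
      by (simp add: enn2real_plus)
    moreover have "ennreal \<bar>phi b - phi a\<bar> \<le> ennreal (p * enn2real (N a b))"
      using L2[OF ab] fa p_pos by (simp add: ennreal_mult ennreal_enn2real_if)
    then have "\<bar>phi b - phi a\<bar> \<le> p * enn2real (N a b)"
      using p_pos by (subst (asm) ennreal_le_iff) auto
    ultimately show ?thesis by simp
  qed
  have phi0: "phi 0 = 0" using f0 by (simp add: phi_def)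
  have Nr_le: "Nr s \<le> Nr 1" if "0 \<le> s" "s \<le> 1" for s
    unfolding Nr_def using that fin by (intro enn2real_mono N_mono) auto
  have Nr_nn: "Nr s \<ge> 0" for s by (simp add: Nr_def)
  have "N 0 0 + N 0 0 = N 0 0 + 0" using N_split[of 0 0] by simp
  then have "N 0 0 = 0" using finab[of 0 0] by (simp only: ennreal_add_left_cancel) auto
  then have Nr0: "Nr 0 = 0" by (simp add: Nr_def)
  have phi_le: "phi s \<le> p * Nr s" if "0 \<le> s" "s < 1" for s
    using key[of 0 s] that phi0 phi_nonneg[of s] Nr0 by simp
  obtain L1 where L1: "((\<lambda>s. phi s + p * Nr s) \<longlongrightarrow> L1) (at_left 1)"
  proof (atomize_elim, rule mono_left_lim)
    fix x y :: real assume xy: "0 < x" "x \<le> y" "y < 1"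
    show "phi x + p * Nr x \<le> phi y + p * Nr y" using key[of x y] xy by (simp add: algebra_simps)
  next
    fix x :: real assume x: "0 < x" "x < 1"
    show "phi x + p * Nr x \<le> 2 * p * Nr 1"
    proof -
      have "phi x \<le> p * Nr x" using phi_le x by simp
      moreover have "p * Nr x \<le> p * Nr 1" using Nr_le[of x] x p_pos by (intro mult_left_mono) auto
      ultimately show ?thesis by linarith
    qed
  qed
  obtain L2 where L2: "((\<lambda>s. p * Nr s - phi s) \<longlongrightarrow> L2) (at_left 1)"
  proof (atomize_elim, rule mono_left_lim)
    fix x y :: real assume xy: "0 < x" "x \<le> y" "y < 1"
    show "p * Nr x - phi x \<le> p * Nr y - phi y" using key[of x y] xy by (simp add: algebra_simps)
  next
    fix x :: real assume x: "0 < x" "x < 1"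
    show "p * Nr x - phi x \<le> p * Nr 1"
    proof -
      have "p * Nr x \<le> p * Nr 1" using Nr_le[of x] x p_pos by (intro mult_left_mono) auto
      then show ?thesis using phi_nonneg[of x] by linarith
    qed
  qed
  have "((\<lambda>s. ((phi s + p * Nr s) - (p * Nr s - phi s)) / 2) \<longlongrightarrow> (L1 - L2) / 2) (at_left 1)"
    by (intro tendsto_intros L1 L2) simp_all
  then show ?thesis by auto
qed

lemma f_lim: assumes fin: "N 0 1 < \<infinity>" shows "\<exists>L. (f \<longlongrightarrow> L) (at_left 1)"
proof -
  obtain l where l: "(phi \<longlongrightarrow> l) (at_left 1)" using phi_lim[OF fin] by blast
  have "((\<lambda>s. phi s powr (1 / p)) \<longlongrightarrow> l powr (1 / p)) (at_left 1)"
    by (rule tendsto_powr'[OF l tendsto_const]) (use p_pos in \<open>auto simp: phi_nonneg\<close>)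
  moreover have "phi s powr (1 / p) = \<bar>f s\<bar>" for s
  proof -
    have "phi s powr (1 / p) = \<bar>f s\<bar> powr (p * (1 / p))" unfolding phi_def by (rule powr_powr)
    also have "p * (1 / p) = 1" using p_pos by simp
    finally show ?thesis by simp
  qed
  ultimately have absl: "((\<lambda>s. \<bar>f s\<bar>) \<longlongrightarrow> l powr (1 / p)) (at_left 1)" by simp
  define c where "c = l powr (1 / p)"
  show ?thesis
  proof (cases "c = 0")
    case True
    then have "(f \<longlongrightarrow> 0) (at_left 1)" using absl by (simp add: c_def tendsto_rabs_zero_iff)
    then show ?thesis by blast
  next
    case False
    then have c: "c > 0" by (simp add: c_def)
    have "eventually (\<lambda>s. \<bar>f s\<bar> > c / 2) (at_left 1)"
      using absl c unfolding c_def by (intro order_tendstoD) auto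
    then obtain b where b: "b < 1" "\<And>y. b < y \<Longrightarrow> y < 1 \<Longrightarrow> \<bar>f y\<bar> > c / 2"
      unfolding eventually_at_left_field by blast
    define b' where "b' = max b 0"
    have b': "b' < 1" "0 \<le> b'" "\<And>y. b' < y \<Longrightarrow> y < 1 \<Longrightarrow> f y \<noteq> 0"
    proof -
      show "b' < 1" "0 \<le> b'" using b(1) by (auto simp: b'_def)
      fix y assume "b' < y" "y < 1"
      then have "\<bar>f y\<bar> > c / 2" using b(2) by (auto simp: b'_def)
      then show "f y \<noteq> 0" using c by auto
    qed
    define s0 where "s0 = (b' + 1) / 2"
    have s0: "b' < s0" "s0 < 1" using b' by (auto simp: s0_def)
    have samesign: "f s0 * f y > 0" if y: "b' < y" "y < 1" for y
    proof (rule ccontr)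
      assume "\<not> f s0 * f y > 0"
      moreover have "f s0 * f y \<noteq> 0" using b'(3)[OF y] b'(3)[OF s0] by simp
      ultimately have neg: "f s0 * f y < 0" by linarith
      define u where "u = min s0 y"
      define v where "v = max s0 y"
      have uv: "b' < u" "u \<le> v" "v < 1" using s0 y by (auto simp: u_def v_def)
      have cuv: "continuous_on {u..v} f" using uv b' by (intro continuous_on_subset[OF cont]) auto
      have "f u * f v < 0" using neg by (auto simp: u_def v_def min_def max_def mult.commute)
      then have "\<exists>x. u \<le> x \<and> x \<le> v \<and> f x = 0"
      proof (cases "f u < 0")
        case True
        then have "f v > 0" using \<open>f u * f v < 0\<close> by (simp add: mult_less_0_iff)
        then show ?thesis using IVT'[of f u 0 v, OF _ _ uv(2) cuv] True by auto
      next
        case False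
        then have "f v < 0" using \<open>f u * f v < 0\<close> by (simp add: mult_less_0_iff)
        then show ?thesis using IVT2'[of f v 0 u, OF _ _ uv(2) cuv] False by auto
      qed
      then obtain x where x: "u \<le> x" "x \<le> v" "f x = 0" by blast
      have "b' < x" "x < 1" using x uv by linarith+
      with b'(3) x(3) show False by blast
    qed
    show ?thesis
    proof (cases "f s0 > 0")
      case True
      have "eventually (\<lambda>s. \<bar>f s\<bar> = f s) (at_left 1)"
        using eventually_at_left_real[OF b'(1)]
      proof (rule eventually_mono)
        fix s assume "s \<in> {b'<..<1}"
        then have "f s0 * f s > 0" using samesign by auto
        then show "\<bar>f s\<bar> = f s" using True by (simp add: zero_less_mult_iff)
      qed
      from Lim_transform_eventually[OF absl this] have "(f \<longlongrightarrow> l powr (1 / p)) (at_left 1)" .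
      then show ?thesis by blast
    next
      case False
      then have fneg: "f s0 < 0" using b'(3)[OF s0] by simp
      have "eventually (\<lambda>s. - \<bar>f s\<bar> = f s) (at_left 1)"
        using eventually_at_left_real[OF b'(1)]
      proof (rule eventually_mono)
        fix s assume "s \<in> {b'<..<1}"
        then have "f s0 * f s > 0" using samesign by auto
        then show "- \<bar>f s\<bar> = f s" using fneg by (simp add: zero_less_mult_iff)
      qed
      moreover have "((\<lambda>s. - \<bar>f s\<bar>) \<longlongrightarrow> - c) (at_left 1)" using absl unfolding c_def by (rule tendsto_minus)
      ultimately have "(f \<longlongrightarrow> - c) (at_left 1)" by (rule Lim_transform_eventually[rotated])
      then show ?thesis by blast
    qed
  qed
qed

lemma at1:
  assumes hyp: "(\<exists>L. (f \<longlongrightarrow> L) (at_left 1)) \<longrightarrow> (f \<longlongrightarrow> f 1) (at_left 1)"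
  shows "ennreal (phi 1) \<le> ennreal p * K 1"
proof (cases "N 0 1 = \<infinity>")
  case True
  then have "K 1 = \<infinity>" using N_K[of 1] by (simp add: top_unique)
  then show ?thesis using p_pos by (simp add: ennreal_mult_top)
next
  case False
  then have fin: "N 0 1 < \<infinity>" by (simp add: less_top)
  have fl: "(f \<longlongrightarrow> f 1) (at_left 1)" using hyp f_lim[OF fin] by blast
  have pl: "(phi \<longlongrightarrow> phi 1) (at_left 1)" unfolding phi_def
    by (rule tendsto_powr'[OF tendsto_rabs[OF fl] tendsto_const]) (use p_pos in auto)
  define B where "B = p * enn2real (N 0 1)"
  have "eventually (\<lambda>s. phi s \<le> B) (at_left 1)"
  proof (rule eventually_at_left_1)
    fix s :: real assume s: "0 < s" "s < 1"
    have "ennreal \<bar>phi s - phi 0\<bar> \<le> ennreal p * N 0 s" using s by (intro L2) auto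
    moreover have "phi 0 = 0" using f0 by (simp add: phi_def)
    ultimately have "ennreal (phi s) \<le> ennreal p * N 0 s" using phi_nonneg[of s] by simp
    also have "\<dots> \<le> ennreal p * N 0 1" using s by (intro mult_left_mono N_mono) auto
    also have "\<dots> = ennreal B" unfolding B_def using fin p_pos
      by (simp add: ennreal_mult ennreal_enn2real_if)
    finally show "phi s \<le> B" using p_pos by (subst (asm) ennreal_le_iff) (auto simp: B_def)
  qed
  then have "phi 1 \<le> B" by (intro tendsto_upperbound[OF pl]) auto
  then have "ennreal (phi 1) \<le> ennreal B" by (rule ennreal_leI)
  also have "\<dots> = ennreal p * N 0 1" unfolding B_def using fin p_pos
    by (simp add: ennreal_mult ennreal_enn2real_if)
  also have "\<dots> \<le> ennreal p * K 1" by (intro mult_left_mono N_K) auto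
  finally show ?thesis .
qed

lemma pointwise:
  assumes hyp: "(\<exists>L. (f \<longlongrightarrow> L) (at_left 1)) \<longrightarrow> (f \<longlongrightarrow> f 1) (at_left 1)"
    and t: "t \<in> {0..1}"
  shows "ennreal (\<bar>f t\<bar> powr p) \<le> ennreal p * K t"
proof -
  consider "t = 0" | "0 < t \<and> t < 1" | "t = 1" using t by fastforce
  then have "ennreal (phi t) \<le> ennreal p * K t"
  proof cases
    case 1 then show ?thesis using f0 by (simp add: phi_def)
  next
    case 2 then show ?thesis using core by auto
  next
    case 3 then show ?thesis using at1[OF hyp] by simp
  qed
  then show ?thesis by (simp add: phi_def)
qed

end

theorem lemma4p1:
  fixes p :: real
  assumes "p \<ge> 1"
  shows "\<exists>C>0. \<forall>(\<Lambda>::nat \<Rightarrow> real) (\<mu>::real measure) (f::real \<Rightarrow> real) (f'::real \<Rightarrow> real).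
     muntz_seq \<Lambda> \<longrightarrow>
     sets \<mu> = sets borel \<longrightarrow> finite_measure \<mu> \<longrightarrow> emeasure \<mu> (UNIV - {0..1}) = 0 \<longrightarrow>
     muntz_Lp p \<Lambda> f \<longrightarrow>
     continuous_on {0..<1} f \<longrightarrow>
     (\<forall>x\<in>{0<..<1}. (f has_real_derivative f' x) (at x)) \<longrightarrow>
     ((\<exists>L. (f \<longlongrightarrow> L) (at_left 1)) \<longrightarrow> (f \<longlongrightarrow> f 1) (at_left 1)) \<longrightarrow>
     f 0 = 0 \<longrightarrow>
     (\<integral>\<^sup>+ t. ennreal (\<bar>f t\<bar> powr p) \<partial>\<mu>)
       \<le> ennreal C * (\<integral>\<^sup>+ \<rho>\<in>{0..1}. (\<integral>\<^sup>+ t. ennreal (\<bar>f' (\<rho> * t)\<bar> * \<bar>f (\<rho> * t)\<bar> powr (p - 1)) \<partial>\<mu>) \<partial>lborel)"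
proof (intro exI[of _ p] conjI allI impI)
  show "p > 0" using assms by simp
  fix \<Lambda> :: "nat \<Rightarrow> real" and \<mu> :: "real measure" and f f' :: "real \<Rightarrow> real"
  assume sets: "sets \<mu> = sets borel" and fm: "finite_measure \<mu>"
    and null: "emeasure \<mu> (UNIV - {0..1}) = 0"
    and cont: "continuous_on {0..<1} f"
    and der: "\<forall>x\<in>{0<..<1}. (f has_real_derivative f' x) (at x)"
    and hyp: "(\<exists>L. (f \<longlongrightarrow> L) (at_left 1)) \<longrightarrow> (f \<longlongrightarrow> f 1) (at_left 1)"
    and f0: "f 0 = 0"
  interpret L: L41 p f f' using assms cont der f0 by unfold_locales auto
  interpret fmu: finite_measure \<mu> by (rule fm)
  interpret pair_sigma_finite lborel \<mu> by (simp add: pair_sigma_finite_def lborel.sigma_finite_measure_axioms fmu.sigma_finite_measure_axioms)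
  have space: "space \<mu> = UNIV" using sets_eq_imp_space_eq[OF sets] by simp
  define H where "H = (\<lambda>\<rho> t. ennreal (L.Gm (\<rho> * t)) * indicator {0..1} \<rho>)"
  have Hm: "case_prod H \<in> borel_measurable (lborel \<Otimes>\<^sub>M \<mu>)"
  proof -
    have "case_prod H \<in> borel_measurable (lborel \<Otimes>\<^sub>M borel)" unfolding H_def by measurable
    then show ?thesis
      by (subst measurable_cong_sets[OF sets_pair_measure_cong[OF refl sets] refl])
  qed
  have Hm': "(\<lambda>(t, \<rho>). H \<rho> t) \<in> borel_measurable (\<mu> \<Otimes>\<^sub>M lborel)"
  proof -
    have "(\<lambda>(t, \<rho>). H \<rho> t) \<in> borel_measurable (borel \<Otimes>\<^sub>M lborel)" unfolding H_def by measurable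
    then show ?thesis
      by (subst measurable_cong_sets[OF sets_pair_measure_cong[OF sets refl] refl])
  qed
  have Km: "(\<lambda>t. \<integral>\<^sup>+\<rho>. H \<rho> t \<partial>lborel) \<in> borel_measurable \<mu>"
    using lborel.borel_measurable_nn_integral_fst[OF Hm'] by simp
  have K_eq: "L.K t = (\<integral>\<^sup>+\<rho>. H \<rho> t \<partial>lborel)" for t unfolding L.K_def H_def ..
  have AE: "AE t in \<mu>. t \<in> {0..1}"
  proof (rule AE_I')
    show "UNIV - {0..1} \<in> null_sets \<mu>" using null sets by (simp add: null_sets_def)
  qed (auto simp: space)
  have "(\<integral>\<^sup>+ t. ennreal (\<bar>f t\<bar> powr p) \<partial>\<mu>) \<le> (\<integral>\<^sup>+ t. ennreal p * (\<integral>\<^sup>+\<rho>. H \<rho> t \<partial>lborel) \<partial>\<mu>)"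
    by (rule nn_integral_mono_AE) (use AE in \<open>eventually_elim, use L.pointwise[OF hyp] K_eq in auto\<close>)
  also have "\<dots> = ennreal p * (\<integral>\<^sup>+ t. (\<integral>\<^sup>+\<rho>. H \<rho> t \<partial>lborel) \<partial>\<mu>)"
    by (rule nn_integral_cmult[OF Km])
  also have "(\<integral>\<^sup>+ t. (\<integral>\<^sup>+\<rho>. H \<rho> t \<partial>lborel) \<partial>\<mu>) = (\<integral>\<^sup>+\<rho>. (\<integral>\<^sup>+ t. H \<rho> t \<partial>\<mu>) \<partial>lborel)"
    by (rule Fubini'[OF Hm])
  also have "\<dots> \<le> (\<integral>\<^sup>+ \<rho>\<in>{0..1}. (\<integral>\<^sup>+ t. ennreal (\<bar>f' (\<rho> * t)\<bar> * \<bar>f (\<rho> * t)\<bar> powr (p - 1)) \<partial>\<mu>) \<partial>lborel)"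
  proof (rule nn_integral_mono)
    fix \<rho> :: real
    have "(\<integral>\<^sup>+ t. H \<rho> t \<partial>\<mu>) = (\<integral>\<^sup>+ t. ennreal (L.Gm (\<rho> * t)) \<partial>\<mu>) * indicator {0..1} \<rho>"
      unfolding H_def
    proof (rule nn_integral_multc)
      have "(\<lambda>t. ennreal (L.Gm (\<rho> * t))) \<in> borel_measurable borel" by measurable
      then show "(\<lambda>t. ennreal (L.Gm (\<rho> * t))) \<in> borel_measurable \<mu>"
        by (subst measurable_cong_sets[OF sets refl])
    qed
    also have "\<dots> \<le> (\<integral>\<^sup>+ t. ennreal (\<bar>f' (\<rho> * t)\<bar> * \<bar>f (\<rho> * t)\<bar> powr (p - 1)) \<partial>\<mu>) * indicator {0..1} \<rho>"
      by (intro mult_right_mono nn_integral_mono ennreal_leI) (auto simp: L.Gm_le[unfolded L.G_def])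
    finally show "(\<integral>\<^sup>+ t. H \<rho> t \<partial>\<mu>) \<le> (\<integral>\<^sup>+ t. ennreal (\<bar>f' (\<rho> * t)\<bar> * \<bar>f (\<rho> * t)\<bar> powr (p - 1)) \<partial>\<mu>) * indicator {0..1} \<rho>" .
  qed
  finally show "(\<integral>\<^sup>+ t. ennreal (\<bar>f t\<bar> powr p) \<partial>\<mu>)
       \<le> ennreal p * (\<integral>\<^sup>+ \<rho>\<in>{0..1}. (\<integral>\<^sup>+ t. ennreal (\<bar>f' (\<rho> * t)\<bar> * \<bar>f (\<rho> * t)\<bar> powr (p - 1)) \<partial>\<mu>) \<partial>lborel)"
    by (simp add: mult_left_mono)
qed

end
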